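(* Let $(d_i)_{i\ge1}$ be an infinite alternate Lyndon word, $M$ its alternate Lyndon system, $L_M$ its language and $H_n$ the number of words of length $n$ in $L_M$. Let $A(n)=a_1\cdots a_n$ and $B(n)=b_1\cdots b_n$ be two words of length $n$ in $L_M$ with $A(n)\prec B(n)$, and let $\Gamma_{A,B}(n)$ be the cardinality of the set of words $X=x_1\cdots x_n\in L_M$ of length $n$ with $A(n)\preceq X\preceq B(n)$. Then $$\Gamma_{A,B}(n)=\sum_{i=1}^{n}(-1)^i(b_i-a_i)H_{n-i}+1.$$
   Context: Alternate order: for two words $x=x_1x_2\cdots$, $y=y_1y_2\cdots$ (both infinite, or both finite of the same length) over a finite alphabet $\{0,\dots,d\}$, $x\prec y$ iff there is $k$ with $x_i=y_i$ for all $i<k$ and $(-1)^k(x_k-y_k)<0$; $x\preceq y$ iff $x=y$ or $x\prec y$. An alternate Lyndon word is an infinite word $(d_i)_{i\ge1}$ with $d_1d_2\cdots\preceq d_nd_{n+1}\cdots$ for all $n\ge1$. Its alternate Lyndon system $M$ is the set of infinite words $x_1x_2\cdots$ over $\{0,\dots,d_1\}$ with $d_1d_2\cdots\preceq x_kx_{k+1}\cdots$ for all $k\ge1$; $L_M$ is the set of finite factors of elements of $M$; $H_0=1$. *)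

theory Defs
  imports Main
begin

text \<open>Infinite words are functions nat => nat, with x 0 the first letter x_1.
  Finite words are lists, with w ! 0 the first letter w_1.
  The 0-based position k corresponds to the 1-based position k+1, hence the
  sign (-1)^(k+1).\<close>

definition alt_less_inf :: "(nat \<Rightarrow> nat) \<Rightarrow> (nat \<Rightarrow> nat) \<Rightarrow> bool" where
  "alt_less_inf x y \<longleftrightarrow>
     (\<exists>k. (\<forall>i<k. x i = y i) \<and> (-1::int)^(k+1) * (int (x k) - int (y k)) < 0)"

definition alt_le_inf :: "(nat \<Rightarrow> nat) \<Rightarrow> (nat \<Rightarrow> nat) \<Rightarrow> bool" where
  "alt_le_inf x y \<longleftrightarrow> x = y \<or> alt_less_inf x y"

definition alt_less :: "nat list \<Rightarrow> nat list \<Rightarrow> bool" where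
  "alt_less x y \<longleftrightarrow> length x = length y \<and>
     (\<exists>k<length x. (\<forall>i<k. x ! i = y ! i) \<and> (-1::int)^(k+1) * (int (x ! k) - int (y ! k)) < 0)"

definition alt_le :: "nat list \<Rightarrow> nat list \<Rightarrow> bool" where
  "alt_le x y \<longleftrightarrow> x = y \<or> alt_less x y"

definition shift :: "(nat \<Rightarrow> nat) \<Rightarrow> nat \<Rightarrow> nat \<Rightarrow> nat" where
  "shift x n = (\<lambda>i. x (i + n))"

definition alt_lyndon :: "(nat \<Rightarrow> nat) \<Rightarrow> bool" where
  "alt_lyndon d \<longleftrightarrow> (\<forall>n. alt_le_inf d (shift d n))"

definition alt_lyndon_system :: "(nat \<Rightarrow> nat) \<Rightarrow> (nat \<Rightarrow> nat) set" where
  "alt_lyndon_system d = {x. (\<forall>i. x i \<le> d 0) \<and> (\<forall>k. alt_le_inf d (shift x k))}"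

definition lang :: "(nat \<Rightarrow> nat) \<Rightarrow> nat list set" where
  "lang d = {w. \<exists>x\<in>alt_lyndon_system d. \<exists>k. w = map x [k..<k + length w]}"

definition H :: "(nat \<Rightarrow> nat) \<Rightarrow> nat \<Rightarrow> nat" where
  "H d n = card {w \<in> lang d. length w = n}"

definition Gamma :: "(nat \<Rightarrow> nat) \<Rightarrow> nat list \<Rightarrow> nat list \<Rightarrow> nat" where
  "Gamma d A B = card {X \<in> lang d. length X = length A \<and> alt_le A X \<and> alt_le X B}"

end

theory Submission
  imports Defs
begin

lemma alt_less_inf_trans:
  assumes "alt_less_inf x y" "alt_less_inf y z" shows "alt_less_inf x z"
proof -
  obtain k1 where k1: "\<forall>i<k1. x i = y i" "(-1::int)^(k1+1) * (int (x k1) - int (y k1)) < 0"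
    using assms(1) unfolding alt_less_inf_def by blast
  obtain k2 where k2: "\<forall>i<k2. y i = z i" "(-1::int)^(k2+1) * (int (y k2) - int (z k2)) < 0"
    using assms(2) unfolding alt_less_inf_def by blast
  show ?thesis unfolding alt_less_inf_def
  proof (cases k1 k2 rule: linorder_cases)
    case less
    then show "\<exists>k. (\<forall>i<k. x i = z i) \<and> (-1::int)^(k+1) * (int (x k) - int (z k)) < 0"
      using k1 k2 by (intro exI[of _ k1]) auto
  next
    case greater
    then show "\<exists>k. (\<forall>i<k. x i = z i) \<and> (-1::int)^(k+1) * (int (x k) - int (z k)) < 0"
      using k1 k2 by (intro exI[of _ k2]) auto
  next
    case equal
    have "(-1::int)^(k1+1) * (int (x k1) - int (z k1)) =
      (-1::int)^(k1+1) * (int (x k1) - int (y k1)) + (-1::int)^(k1+1) * (int (y k1) - int (z k1))"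
      by (simp add: algebra_simps)
    then show "\<exists>k. (\<forall>i<k. x i = z i) \<and> (-1::int)^(k+1) * (int (x k) - int (z k)) < 0"
      using k1 k2 equal by (intro exI[of _ k1]) auto
  qed
qed

lemma alt_le_less_inf_trans:
  "alt_le_inf x y \<Longrightarrow> alt_less_inf y z \<Longrightarrow> alt_less_inf x z"
  unfolding alt_le_inf_def using alt_less_inf_trans by blast

lemma alt_less_Nil1[simp]: "\<not> alt_less [] y" unfolding alt_less_def by auto
lemma alt_less_Nil2[simp]: "\<not> alt_less x []" unfolding alt_less_def by auto

lemma alt_less_Cons:
  "alt_less (a#x) (b#y) \<longleftrightarrow> (length x = length y \<and> (b < a \<or> (a = b \<and> alt_less y x)))"
proof
  assume h: "alt_less (a#x) (b#y)"
  then have len: "length x = length y" unfolding alt_less_def by simp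
  from h obtain k where k: "k < Suc (length x)" "\<forall>i<k. (a#x) ! i = (b#y) ! i"
     "(-1::int)^(k+1) * (int ((a#x) ! k) - int ((b#y) ! k)) < 0"
    unfolding alt_less_def by auto
  show "length x = length y \<and> (b < a \<or> (a = b \<and> alt_less y x))"
  proof (cases k)
    case 0
    then show ?thesis using k len by simp
  next
    case (Suc m)
    have ab: "a = b" using k(2) Suc by (metis nth_Cons_0 zero_less_Suc)
    have agree: "\<forall>i<m. y ! i = x ! i" using k(2) Suc by (metis Suc_mono nth_Cons_Suc)
    have "(-1::int)^(m+1) * (int (y ! m) - int (x ! m)) < 0"
      using k(3) Suc by (simp add: algebra_simps)
    then have "alt_less y x" unfolding alt_less_def using len agree k(1) Suc by auto
    then show ?thesis using ab len by simp
  qed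
next
  assume h: "length x = length y \<and> (b < a \<or> (a = b \<and> alt_less y x))"
  show "alt_less (a#x) (b#y)"
  proof (cases "b < a")
    case True
    then show ?thesis unfolding alt_less_def using h by (intro conjI exI[of _ 0]) auto
  next
    case False
    then have ab: "a = b" and yx: "alt_less y x" using h by auto
    from yx obtain m where m: "m < length y" "\<forall>i<m. y ! i = x ! i"
      "(-1::int)^(m+1) * (int (y ! m) - int (x ! m)) < 0" unfolding alt_less_def by auto
    have "\<forall>i<Suc m. (a#x) ! i = (b#y) ! i"
      using m(2) ab by (auto simp: less_Suc_eq_0_disj)
    moreover have "(-1::int)^(Suc m+1) * (int ((a#x) ! Suc m) - int ((b#y) ! Suc m)) < 0"
      using m(3) by (simp add: algebra_simps)
    ultimately show ?thesis unfolding alt_less_def using h m(1)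
      by (intro conjI exI[of _ "Suc m"]) auto
  qed
qed

lemma alt_less_len: "alt_less x y \<Longrightarrow> length x = length y"
  unfolding alt_less_def by simp

lemma alt_less_trans_aux:
  "(\<forall>y z. alt_less x y \<longrightarrow> alt_less y z \<longrightarrow> alt_less x z) \<and>
   (\<forall>y z. alt_less z y \<longrightarrow> alt_less y x \<longrightarrow> alt_less z x)"
proof (induction x)
  case Nil then show ?case by simp
next
  case (Cons a x)
  show ?case
  proof (intro conjI allI impI)
    fix y z assume h: "alt_less (a#x) y" "alt_less y z"
    obtain b y' where y: "y = b # y'" using h by (cases y) auto
    obtain c z' where z: "z = c # z'" using h y by (cases z) auto
    have l1: "length x = length y'" and c1: "b < a \<or> (a = b \<and> alt_less y' x)"
      using h(1) unfolding y alt_less_Cons by auto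
    have l2: "length y' = length z'" and c2: "c < b \<or> (b = c \<and> alt_less z' y')"
      using h(2) unfolding y z alt_less_Cons by auto
    have "c < a \<or> (a = c \<and> alt_less z' x)"
      using c1 c2 Cons.IH by auto
    then show "alt_less (a#x) z" unfolding z alt_less_Cons using l1 l2 by simp
  next
    fix y z assume h: "alt_less z y" "alt_less y (a#x)"
    obtain b y' where y: "y = b # y'" using h by (cases y) auto
    obtain c z' where z: "z = c # z'" using h y by (cases z) auto
    have l1: "length y' = length x" and c1: "a < b \<or> (b = a \<and> alt_less x y')"
      using h(2) unfolding y alt_less_Cons by auto
    have l2: "length z' = length y'" and c2: "b < c \<or> (c = b \<and> alt_less y' z')"
      using h(1) unfolding y z alt_less_Cons by auto
    have "a < c \<or> (c = a \<and> alt_less x z')"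
      using c1 c2 Cons.IH by auto
    then show "alt_less z (a#x)" unfolding z alt_less_Cons using l1 l2 by simp
  qed
qed

lemma alt_less_trans: "alt_less x y \<Longrightarrow> alt_less y z \<Longrightarrow> alt_less x z"
  using alt_less_trans_aux by blast

lemma alt_less_irrefl: "\<not> alt_less x x"
  by (induction x) (auto simp: alt_less_Cons)

lemma alt_less_total:
  "length x = length y \<Longrightarrow> x \<noteq> y \<Longrightarrow> alt_less x y \<or> alt_less y x"
proof (induction x arbitrary: y)
  case Nil then show ?case by simp
next
  case (Cons a x)
  obtain b y' where y: "y = b # y'" using Cons.prems by (cases y) auto
  have l: "length x = length y'" using Cons.prems y by simp
  show ?case
  proof (cases "a = b")
    case True
    then have "x \<noteq> y'" using Cons.prems y by simp
    then show ?thesis using Cons.IH l True unfolding y alt_less_Cons by auto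
  next
    case False
    then show ?thesis using l unfolding y alt_less_Cons by auto
  qed
qed


lemma shift_shift: "shift (shift x q) k = shift x (k + q)"
  unfolding shift_def by (simp add: add.assoc)

lemma shift_0: "shift x 0 = x" unfolding shift_def by simp

lemma M_shift: "x \<in> alt_lyndon_system d \<Longrightarrow> shift x q \<in> alt_lyndon_system d"
  unfolding alt_lyndon_system_def by (auto simp: shift_shift) (simp add: shift_def)

lemma lang_obtain:
  assumes "w \<in> lang d"
  shows "\<exists>x\<in>alt_lyndon_system d. \<exists>k. \<forall>i<length w. w ! i = x (k + i)"
proof -
  from assms have "\<exists>x\<in>alt_lyndon_system d. \<exists>k. w = map x [k..<k + length w]"
    unfolding lang_def by (simp only: mem_Collect_eq)
  then obtain x k where x: "x \<in> alt_lyndon_system d" and eq: "w = map x [k..<k + length w]"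
    by blast
  have "\<forall>i<length w. w ! i = x (k + i)"
  proof (intro allI impI)
    fix i assume i: "i < length w"
    have "w ! i = map x [k..<k + length w] ! i" using arg_cong[OF eq, of "\<lambda>l. l ! i"] by simp
    then show "w ! i = x (k + i)" using i by simp
  qed
  then show ?thesis using x by blast
qed

lemma lang_intro:
  assumes "x \<in> alt_lyndon_system d" "\<forall>i<length w. w ! i = x (k + i)"
  shows "w \<in> lang d"
proof -
  have "w = map x [k..<k + length w]"
    by (rule nth_equalityI) (use assms(2) in auto)
  then show ?thesis unfolding lang_def using assms(1) by blast
qed

lemma lang_letters: "w \<in> lang d \<Longrightarrow> c \<in> set w \<Longrightarrow> c \<le> d 0"
  using lang_obtain[of w d] unfolding alt_lyndon_system_def by (auto simp: in_set_conv_nth)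

lemma lang_repr:
  assumes "Y \<in> lang d"
  shows "\<exists>y \<in> alt_lyndon_system d. \<forall>i<length Y. Y ! i = y i"
proof -
  obtain x k where x: "x \<in> alt_lyndon_system d" "\<forall>i<length Y. Y ! i = x (k + i)"
    using lang_obtain[OF assms] by blast
  have "\<forall>i<length Y. Y ! i = shift x k i" using x(2) by (simp add: shift_def add.commute)
  then show ?thesis using M_shift[OF x(1)] by blast
qed

lemma lang_Cons_tl:
  assumes "c # Y \<in> lang d" shows "Y \<in> lang d"
proof -
  obtain x k where x: "x \<in> alt_lyndon_system d" "\<forall>i<length (c # Y). (c # Y) ! i = x (k + i)"
    using lang_obtain[OF assms] by blast
  have "\<forall>i<length Y. Y ! i = x (Suc k + i)"
  proof (intro allI impI)
    fix i assume "i < length Y"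
    then have "(c # Y) ! Suc i = x (k + Suc i)" using x(2) by (metis Suc_mono length_Cons)
    then show "Y ! i = x (Suc k + i)" by simp
  qed
  then show ?thesis using lang_intro[OF x(1)] by blast
qed

lemma lang_Cons_intro:
  assumes y: "y \<in> alt_lyndon_system d" "\<forall>i<length Y. Y ! i = y i"
    and c: "c \<le> d 0"
    and z: "alt_less_inf d (\<lambda>i. case i of 0 \<Rightarrow> c | Suc j \<Rightarrow> y j)"
  shows "c # Y \<in> lang d"
proof -
  define z where "z = (\<lambda>i. case i of 0 \<Rightarrow> c | Suc j \<Rightarrow> y j)"
  have sh: "shift z (Suc j) = shift y j" for j
    unfolding z_def shift_def by simp
  have "z \<in> alt_lyndon_system d"
    unfolding alt_lyndon_system_def
  proof (intro CollectI conjI allI)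
    fix i show "z i \<le> d 0" using y(1) c unfolding z_def alt_lyndon_system_def
      by (cases i) auto
  next
    fix k show "alt_le_inf d (shift z k)"
    proof (cases k)
      case 0 then show ?thesis using z unfolding z_def alt_le_inf_def by (simp add: shift_0)
    next
      case (Suc j) then show ?thesis using y(1) sh unfolding alt_lyndon_system_def by simp
    qed
  qed
  moreover have "\<forall>i<length (c # Y). (c # Y) ! i = z (0 + i)"
  proof (intro allI impI)
    fix i assume "i < length (c # Y)"
    then show "(c # Y) ! i = z (0 + i)" using y(2) unfolding z_def by (cases i) auto
  qed
  ultimately show ?thesis using lang_intro by blast
qed


lemma lang_Cons_small:
  assumes "Y \<in> lang d" "c < d 0" shows "c # Y \<in> lang d"
proof -
  obtain y where y: "y \<in> alt_lyndon_system d" "\<forall>i<length Y. Y ! i = y i"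
    using lang_repr[OF assms(1)] by blast
  have "alt_less_inf d (\<lambda>i. case i of 0 \<Rightarrow> c | Suc j \<Rightarrow> y j)"
    unfolding alt_less_inf_def using assms(2) by (intro exI[of _ 0]) simp
  then show ?thesis using lang_Cons_intro[OF y] assms(2) by simp
qed

lemma lang_Cons_down:
  assumes h: "d 0 # Y \<in> lang d" and Y': "Y' \<in> lang d" and less: "alt_less Y' Y"
  shows "d 0 # Y' \<in> lang d"
proof -
  obtain u where u: "u \<in> alt_lyndon_system d" "\<forall>i<length (d 0 # Y). (d 0 # Y) ! i = u i"
    using lang_repr[OF h] by blast
  obtain y where y: "y \<in> alt_lyndon_system d" "\<forall>i<length Y'. Y' ! i = y i"
    using lang_repr[OF Y'] by blast
  define z where "z = (\<lambda>i. case i of 0 \<Rightarrow> d 0 | Suc j \<Rightarrow> y j)"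
  have "alt_le_inf d (shift u 0)" using u(1) unfolding alt_lyndon_system_def by blast
  then have du: "alt_le_inf d u" by (simp add: shift_0)
  obtain m where m: "m < length Y'" "\<forall>i<m. Y' ! i = Y ! i"
    "(-1::int)^(m+1) * (int (Y' ! m) - int (Y ! m)) < 0"
    using less unfolding alt_less_def by auto
  have len: "length Y' = length Y" using less by (rule alt_less_len)
  have "(d 0 # Y) ! 0 = u 0" by (rule u(2)[rule_format]) simp
  then have u0: "u 0 = d 0" by simp
  have uS: "u (Suc i) = Y ! i" if "i < length Y" for i
  proof -
    have "(d 0 # Y) ! Suc i = u (Suc i)" by (rule u(2)[rule_format]) (use that in simp)
    then show ?thesis by simp
  qed
  have "alt_less_inf u z" unfolding alt_less_inf_def
  proof (intro exI[of _ "Suc m"] conjI allI impI)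
    fix i assume i: "i < Suc m"
    show "u i = z i"
    proof (cases i)
      case 0 then show ?thesis using u0 unfolding z_def by simp
    next
      case (Suc j)
      then have "j < m" using i by simp
      then show ?thesis using Suc uS m len y(2) unfolding z_def by simp
    qed
  next
    have "u (Suc m) = Y ! m" using uS m(1) len by simp
    moreover have "z (Suc m) = Y' ! m" using y(2) m(1) unfolding z_def by simp
    ultimately show "(-1::int)^(Suc m + 1) * (int (u (Suc m)) - int (z (Suc m))) < 0"
      using m(3) by (simp add: algebra_simps)
  qed
  then have "alt_less_inf d z" using du alt_le_less_inf_trans by blast
  then show ?thesis using lang_Cons_intro[OF y] unfolding z_def by simp
qed


definition Ln :: "(nat \<Rightarrow> nat) \<Rightarrow> nat \<Rightarrow> nat list set" where
  "Ln d n = {w \<in> lang d. length w = n}"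

lemma H_Ln: "H d n = card (Ln d n)" unfolding H_def Ln_def by simp

lemma finite_Ln: "finite (Ln d n)"
proof -
  have "Ln d n \<subseteq> {xs. set xs \<subseteq> {..d 0} \<and> length xs = n}"
    unfolding Ln_def using lang_letters by fastforce
  moreover have "finite {xs. set xs \<subseteq> {..d 0} \<and> length xs = n}"
    by (rule finite_lists_length_eq) simp
  ultimately show ?thesis by (rule finite_subset)
qed

lemma lang_Cons_le: "c # Y \<in> lang d \<Longrightarrow> c \<le> d 0"
  using lang_letters by fastforce

lemma count_hd:
  fixes m :: nat and d :: "nat \<Rightarrow> nat"
  defines "t \<equiv> card {Y \<in> Ln d m. d 0 # Y \<in> lang d}"
  shows "j \<le> d 0 \<Longrightarrow> card {X \<in> Ln d (Suc m). d 0 - j \<le> hd X} = t + j * H d m"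
proof (induction j)
  case 0
  have "{X \<in> Ln d (Suc m). d 0 - 0 \<le> hd X} = (\<lambda>Y. d 0 # Y) ` {Y \<in> Ln d m. d 0 # Y \<in> lang d}"
  proof (intro equalityI subsetI)
    fix X assume X: "X \<in> {X \<in> Ln d (Suc m). d 0 - 0 \<le> hd X}"
    then obtain c Y where XY: "X = c # Y" unfolding Ln_def by (cases X) auto
    have "c \<le> d 0" using X XY lang_Cons_le unfolding Ln_def by blast
    then have "c = d 0" using X XY by simp
    then show "X \<in> (\<lambda>Y. d 0 # Y) ` {Y \<in> Ln d m. d 0 # Y \<in> lang d}"
      using X XY lang_Cons_tl unfolding Ln_def by auto
  next
    fix X assume "X \<in> (\<lambda>Y. d 0 # Y) ` {Y \<in> Ln d m. d 0 # Y \<in> lang d}"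
    then show "X \<in> {X \<in> Ln d (Suc m). d 0 - 0 \<le> hd X}" unfolding Ln_def by auto
  qed
  then show ?case unfolding t_def by (simp add: card_image inj_on_def)
next
  case (Suc j)
  define c where "c = d 0 - Suc j"
  have c1: "Suc c = d 0 - j" and c2: "c < d 0" using Suc.prems unfolding c_def by auto
  have eq: "{X \<in> Ln d (Suc m). c \<le> hd X} =
      {X \<in> Ln d (Suc m). d 0 - j \<le> hd X} \<union> (\<lambda>Y. c # Y) ` Ln d m"
  proof (intro equalityI subsetI)
    fix X assume X: "X \<in> {X \<in> Ln d (Suc m). c \<le> hd X}"
    then obtain a Y where XY: "X = a # Y" unfolding Ln_def by (cases X) auto
    show "X \<in> {X \<in> Ln d (Suc m). d 0 - j \<le> hd X} \<union> (\<lambda>Y. c # Y) ` Ln d m"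
    proof (cases "a = c")
      case True
      then show ?thesis using X XY lang_Cons_tl unfolding Ln_def by auto
    next
      case False
      then show ?thesis using X XY c1 by auto
    qed
  next
    fix X assume "X \<in> {X \<in> Ln d (Suc m). d 0 - j \<le> hd X} \<union> (\<lambda>Y. c # Y) ` Ln d m"
    then show "X \<in> {X \<in> Ln d (Suc m). c \<le> hd X}"
      using c1 c2 lang_Cons_small unfolding Ln_def by auto
  qed
  have disj: "{X \<in> Ln d (Suc m). d 0 - j \<le> hd X} \<inter> (\<lambda>Y. c # Y) ` Ln d m = {}"
    using c1 by auto
  have fin1: "finite {X \<in> Ln d (Suc m). d 0 - j \<le> hd X}" using finite_Ln by simp
  have fin2: "finite ((\<lambda>Y. c # Y) ` Ln d m)" using finite_Ln by simp
  have "card ((\<lambda>Y. c # Y) ` Ln d m) = H d m" unfolding H_Ln by (simp add: card_image inj_on_def)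
  then have "card {X \<in> Ln d (Suc m). c \<le> hd X} = t + j * H d m + H d m"
    using card_Un_disjoint[OF fin1 fin2 disj] Suc eq by simp
  then show ?case unfolding c_def by simp
qed

definition G :: "(nat \<Rightarrow> nat) \<Rightarrow> nat list \<Rightarrow> nat" where
  "G d W = card {X \<in> lang d. length X = length W \<and> alt_less X W}"

lemma G_Cons:
  assumes cY: "c # Y \<in> lang d" and len: "length Y = m"
  shows "G d (c # Y) + 1 + G d Y = card {X \<in> Ln d (Suc m). c \<le> hd X}"
proof -
  define S where "S = {X \<in> lang d. length X = length (c # Y) \<and> alt_less X (c # Y)}"
  define S3' where "S3' = {Y' \<in> lang d. length Y' = length Y \<and> alt_less Y' Y}"
  define S3 where "S3 = (\<lambda>Y'. c # Y') ` S3'"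
  have Y: "Y \<in> lang d" using cY lang_Cons_tl by blast
  have cle: "c \<le> d 0" using cY lang_Cons_le by blast
  have S3_lang: "c # Y' \<in> lang d" if "Y' \<in> S3'" for Y'
  proof (cases "c < d 0")
    case True then show ?thesis using that lang_Cons_small unfolding S3'_def by blast
  next
    case False
    then have "c = d 0" using cle by simp
    then show ?thesis using that lang_Cons_down cY unfolding S3'_def by blast
  qed
  have eq: "{X \<in> Ln d (Suc m). c \<le> hd X} = S \<union> insert (c # Y) S3"
  proof (intro equalityI subsetI)
    fix X assume X: "X \<in> {X \<in> Ln d (Suc m). c \<le> hd X}"
    then obtain a Y' where XY: "X = a # Y'" unfolding Ln_def by (cases X) auto
    have Y'l: "Y' \<in> lang d" "length Y' = m" using X XY lang_Cons_tl unfolding Ln_def by auto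
    show "X \<in> S \<union> insert (c # Y) S3"
    proof (cases "a = c")
      case False
      then have "c < a" using X XY by simp
      then show ?thesis using X XY Y'l len unfolding S_def Ln_def by (simp add: alt_less_Cons)
    next
      case True
      show ?thesis
      proof (cases "Y' = Y")
        case True then show ?thesis using XY \<open>a = c\<close> by simp
      next
        case False
        then have "alt_less Y' Y \<or> alt_less Y Y'" using alt_less_total Y'l len by auto
        then show ?thesis
        proof
          assume "alt_less Y' Y"
          then show ?thesis using XY \<open>a = c\<close> Y'l len unfolding S3_def S3'_def by auto
        next
          assume "alt_less Y Y'"
          then show ?thesis using X XY \<open>a = c\<close> Y'l len unfolding S_def Ln_def
            by (simp add: alt_less_Cons)
        qed
      qed
    qed
  next
    fix X assume X: "X \<in> S \<union> insert (c # Y) S3"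
    show "X \<in> {X \<in> Ln d (Suc m). c \<le> hd X}"
    proof -
      { assume "X \<in> S"
        then obtain a Y' where XY: "X = a # Y'" unfolding S_def by (cases X) auto
        have ?thesis using \<open>X \<in> S\<close> len unfolding S_def Ln_def XY
          by (auto simp: alt_less_Cons) }
      moreover
      { assume "X = c # Y" then have ?thesis using cY len unfolding Ln_def by simp }
      moreover
      { assume "X \<in> S3"
        then obtain Y' where "Y' \<in> S3'" "X = c # Y'" unfolding S3_def by auto
        then have ?thesis using S3_lang len unfolding Ln_def S3'_def by auto }
      ultimately show ?thesis using X by blast
    qed
  qed
  have finS: "finite S"
    by (rule finite_subset[OF _ finite_Ln[of d "Suc m"]]) (auto simp: S_def Ln_def len)
  have finS3': "finite S3'"
    by (rule finite_subset[OF _ finite_Ln[of d m]]) (auto simp: S3'_def Ln_def len)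
  have finS3: "finite S3" unfolding S3_def using finS3' by simp
  have notin: "c # Y \<notin> S3" unfolding S3_def S3'_def using alt_less_irrefl by auto
  have disj: "S \<inter> insert (c # Y) S3 = {}"
  proof -
    have "c # Y \<notin> S" unfolding S_def using alt_less_irrefl by auto
    moreover have "X \<notin> S" if XS3: "X \<in> S3" for X
    proof
      assume XS: "X \<in> S"
      obtain Y' where Y': "Y' \<in> S3'" "X = c # Y'" using XS3 unfolding S3_def by auto
      have "alt_less Y Y'" using XS Y' unfolding S_def by (simp add: alt_less_Cons)
      moreover have "alt_less Y' Y" using Y' unfolding S3'_def by simp
      ultimately show False using alt_less_trans alt_less_irrefl by blast
    qed
    ultimately show ?thesis by blast
  qed
  have "card S3 = card S3'" unfolding S3_def by (simp add: card_image inj_on_def)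
  moreover have "card S3' = G d Y" unfolding S3'_def G_def by simp
  moreover have "card S = G d (c # Y)" unfolding S_def G_def by simp
  moreover have "card (S \<union> insert (c # Y) S3) = card S + (card S3 + 1)"
    using card_Un_disjoint[OF finS _ disj] finS3 notin by simp
  ultimately show ?thesis using eq by simp
qed


definition phi :: "(nat \<Rightarrow> nat) \<Rightarrow> nat list \<Rightarrow> int" where
  "phi d W = (\<Sum>k<length W. (-1::int)^(k+1) * int (W ! k) * int (H d (length W - 1 - k)))"

lemma phi_Cons: "phi d (c # Y) = - int c * int (H d (length Y)) - phi d Y"
proof -
  have "phi d (c # Y) = (-1::int)^1 * int c * int (H d (length Y)) +
     (\<Sum>k<length Y. (-1::int)^(Suc k+1) * int (Y ! k) * int (H d (length Y - 1 - k)))"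
    unfolding phi_def by (simp only: length_Cons sum.lessThan_Suc_shift) simp
  also have "(\<Sum>k<length Y. (-1::int)^(Suc k+1) * int (Y ! k) * int (H d (length Y - 1 - k)))
      = - phi d Y"
    unfolding phi_def by (simp add: sum_negf[symmetric])
  finally show ?thesis by simp
qed

lemma G_phi: "\<exists>C::int. \<forall>W. W \<in> lang d \<longrightarrow> length W = n \<longrightarrow> int (G d W) = phi d W + C"
proof (induction n)
  case 0
  have "G d [] = 0" unfolding G_def by simp
  moreover have "phi d [] = 0" unfolding phi_def by simp
  ultimately show ?case by (intro exI[of _ 0]) auto
next
  case (Suc m)
  obtain C' where C': "\<forall>W. W \<in> lang d \<longrightarrow> length W = m \<longrightarrow> int (G d W) = phi d W + C'"
    using Suc.IH by blast
  define t where "t = card {Y \<in> Ln d m. d 0 # Y \<in> lang d}"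
  show ?case
  proof (intro exI[of _ "int t + int (d 0) * int (H d m) - 1 - C'"] allI impI)
    fix W assume W: "W \<in> lang d" "length W = Suc m"
    then obtain c Y where WY: "W = c # Y" by (cases W) auto
    have Y: "Y \<in> lang d" "length Y = m" using W WY lang_Cons_tl by auto
    have cle: "c \<le> d 0" using W WY lang_Cons_le by blast
    have "G d (c # Y) + 1 + G d Y = t + (d 0 - c) * H d m"
      using G_Cons[of c Y d m] count_hd[of "d 0 - c" d m] W WY Y cle unfolding t_def by simp
    then have "int (G d (c # Y)) + 1 + int (G d Y) = int t + (int (d 0) - int c) * int (H d m)"
      using cle by (metis of_nat_add of_nat_diff of_nat_mult of_nat_1)
    moreover have "int (G d Y) = phi d Y + C'" using C' Y by blast
    moreover have "phi d (c # Y) = - int c * int (H d m) - phi d Y" using phi_Cons Y by simp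
    ultimately show "int (G d W) = phi d W + (int t + int (d 0) * int (H d m) - 1 - C')"
      unfolding WY by (simp add: algebra_simps)
  qed
qed

theorem lemma1:
  fixes d :: "nat \<Rightarrow> nat" and A B :: "nat list" and n :: nat
  assumes "alt_lyndon d"
    and "A \<in> lang d" and "B \<in> lang d"
    and "length A = n" and "length B = n"
    and "alt_less A B"
  shows "int (Gamma d A B) =
    (\<Sum>i=1..n. (-1::int)^i * (int (B ! (i - 1)) - int (A ! (i - 1))) * int (H d (n - i))) + 1"
proof -
  define SA where "SA = {X \<in> lang d. length X = n \<and> alt_less X A}"
  define SB where "SB = {X \<in> lang d. length X = n \<and> alt_less X B}"
  define GS where "GS = {X \<in> lang d. length X = length A \<and> alt_le A X \<and> alt_le X B}"
  have fin: "finite S" if "S \<subseteq> Ln d n" for S using finite_subset[OF that finite_Ln] .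
  have eq: "insert B SB = GS \<union> SA"
  proof (intro equalityI subsetI)
    fix X assume X: "X \<in> insert B SB"
    show "X \<in> GS \<union> SA"
    proof (cases "X = A \<or> alt_less X A")
      case True
      then show ?thesis
      proof
        assume "X = A" then show ?thesis using assms X unfolding GS_def alt_le_def by auto
      next
        assume "alt_less X A" then show ?thesis using assms X unfolding SA_def SB_def by auto
      qed
    next
      case False
      have "length X = n" using X assms unfolding SB_def by auto
      then have "alt_less A X" using False alt_less_total assms by metis
      then show ?thesis using X assms unfolding GS_def SB_def alt_le_def by auto
    qed
  next
    fix X assume X: "X \<in> GS \<union> SA"
    show "X \<in> insert B SB"
    proof (cases "X = B")
      case True then show ?thesis by simp
    next
      case False
      have "alt_less X B" using X False assms alt_less_trans unfolding GS_def SA_def alt_le_def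
        by blast
      then show ?thesis using X assms unfolding GS_def SA_def SB_def by auto
    qed
  qed
  have disj: "GS \<inter> SA = {}"
    using alt_less_trans alt_less_irrefl unfolding GS_def SA_def alt_le_def by blast
  have nB: "B \<notin> SB" unfolding SB_def using alt_less_irrefl by blast
  have fSB: "finite SB" by (rule fin) (auto simp: SB_def Ln_def)
  have fSA: "finite SA" by (rule fin) (auto simp: SA_def Ln_def)
  have fGS: "finite GS" by (rule fin) (auto simp: GS_def Ln_def assms)
  have "card SB + 1 = card GS + card SA"
    using arg_cong[OF eq, of card] card_Un_disjoint[OF fGS fSA disj] fSB nB by simp
  moreover have "card SB = G d B" unfolding SB_def G_def using assms by simp
  moreover have "card SA = G d A" unfolding SA_def G_def using assms by simp
  moreover have "card GS = Gamma d A B" unfolding GS_def Gamma_def by simp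
  ultimately have g: "int (Gamma d A B) = int (G d B) - int (G d A) + 1" by simp
  obtain C where C: "\<forall>W. W \<in> lang d \<longrightarrow> length W = n \<longrightarrow> int (G d W) = phi d W + C"
    using G_phi by blast
  have "int (Gamma d A B) = phi d B - phi d A + 1" using g C assms by simp
  also have "phi d B - phi d A =
      (\<Sum>k<n. (-1::int)^(k+1) * (int (B ! k) - int (A ! k)) * int (H d (n - 1 - k)))"
    unfolding phi_def using assms by (simp add: sum_subtractf[symmetric] algebra_simps)
  also have "\<dots> = (\<Sum>i=1..n. (-1::int)^i * (int (B ! (i - 1)) - int (A ! (i - 1))) * int (H d (n - i)))"
    by (simp only: One_nat_def sum.atLeast1_atMost_eq) simp
  finally show ?thesis .
qed

end
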